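(* Let $d\in\mathbb N$ and let $X_1,\dots,X_d$ be arbitrary real-valued random variables on an atomless probability space (no integrability assumed). Then $$X_1+\cdots+X_d\le_{\rm cx} X_1^{\rm co}+\cdots+X_d^{\rm co},$$ where $(X_1^{\rm co},\dots,X_d^{\rm co})$ is a comonotonic version of $(X_1,\dots,X_d)$.
   Context: An expectation $\mathbb E[V]$ is well-defined if $\mathbb E[\max\{V,0\}]<\infty$ or $\mathbb E[\max\{-V,0\}]<\infty$. We write $U\le_{\rm cx}V$ if $\mathbb E[u(U)]\le\mathbb E[u(V)]$ for all convex $u:\mathbb R\to\mathbb R$ such that both expectations are well-defined. A pair $(X,Y)$ is comonotonic if $X=f(Z)$, $Y=g(Z)$ a.s. for some random variable $Z$ and increasing $f,g$; a random vector is comonotonic if each pair of its components is comonotonic. A comonotonic version of $(X_1,\dots,X_d)$ is a comonotonic random vector $(X_1',\dots,X_d')$ with $X_i'$ distributed as $X_i$ for each $i$. *)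

theory Defs
  imports "HOL-Probability.Probability"
begin

definition atomless :: "'a measure \<Rightarrow> bool" where
  "atomless M \<longleftrightarrow> (\<forall>A\<in>sets M. measure M A > 0 \<longrightarrow>
      (\<exists>B\<in>sets M. B \<subseteq> A \<and> 0 < measure M B \<and> measure M B < measure M A))"

definition pos_part_exp :: "'a measure \<Rightarrow> ('a \<Rightarrow> real) \<Rightarrow> ennreal" where
  "pos_part_exp M V = (\<integral>\<^sup>+ x. ennreal (max (V x) 0) \<partial>M)"

definition neg_part_exp :: "'a measure \<Rightarrow> ('a \<Rightarrow> real) \<Rightarrow> ennreal" where
  "neg_part_exp M V = (\<integral>\<^sup>+ x. ennreal (max (- V x) 0) \<partial>M)"

definition exp_well_defined :: "'a measure \<Rightarrow> ('a \<Rightarrow> real) \<Rightarrow> bool" where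
  "exp_well_defined M V \<longleftrightarrow> pos_part_exp M V < \<infinity> \<or> neg_part_exp M V < \<infinity>"

definition ext_expectation :: "'a measure \<Rightarrow> ('a \<Rightarrow> real) \<Rightarrow> ereal" where
  "ext_expectation M V = enn2ereal (pos_part_exp M V) - enn2ereal (neg_part_exp M V)"

definition cx_le :: "'a measure \<Rightarrow> ('a \<Rightarrow> real) \<Rightarrow> ('a \<Rightarrow> real) \<Rightarrow> bool" where
  "cx_le M U V \<longleftrightarrow> (\<forall>u::real \<Rightarrow> real. convex_on UNIV u \<longrightarrow>
      exp_well_defined M (\<lambda>x. u (U x)) \<longrightarrow> exp_well_defined M (\<lambda>x. u (V x)) \<longrightarrow>
      ext_expectation M (\<lambda>x. u (U x)) \<le> ext_expectation M (\<lambda>x. u (V x)))"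

definition comonotonic_pair :: "'a measure \<Rightarrow> ('a \<Rightarrow> real) \<Rightarrow> ('a \<Rightarrow> real) \<Rightarrow> bool" where
  "comonotonic_pair M X Y \<longleftrightarrow> (\<exists>(Z::'a \<Rightarrow> real) (f::real \<Rightarrow> real) (g::real \<Rightarrow> real).
      Z \<in> borel_measurable M \<and> mono f \<and> mono g \<and>
      (AE x in M. X x = f (Z x) \<and> Y x = g (Z x)))"

definition comonotonic_vec :: "'a measure \<Rightarrow> nat \<Rightarrow> (nat \<Rightarrow> 'a \<Rightarrow> real) \<Rightarrow> bool" where
  "comonotonic_vec M d X \<longleftrightarrow> (\<forall>i<d. \<forall>j<d. comonotonic_pair M (X i) (X j))"

definition comonotonic_version ::
    "'a measure \<Rightarrow> nat \<Rightarrow> (nat \<Rightarrow> 'a \<Rightarrow> real) \<Rightarrow> (nat \<Rightarrow> 'a \<Rightarrow> real) \<Rightarrow> bool" where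
  "comonotonic_version M d X Y \<longleftrightarrow>
     (\<forall>i<d. Y i \<in> borel_measurable M \<and> distr M borel (Y i) = distr M borel (X i)) \<and>
     comonotonic_vec M d Y"

end

theory Submission
  imports Defs
begin


definition hc :: "(nat \<Rightarrow> real) \<Rightarrow> (real \<Rightarrow> real) \<Rightarrow> nat \<Rightarrow> real" where
  "hc r s k = (if k = 0 then s (r 0) else s (r k) - s (r (k - 1)))"

definition hsum :: "(nat \<Rightarrow> real) \<Rightarrow> (real \<Rightarrow> real) \<Rightarrow> nat \<Rightarrow> real \<Rightarrow> real" where
  "hsum r s K x = (\<Sum>k\<le>K. hc r s k * max (x - r k) 0)"

lemma hsum_Suc: "hsum r s (Suc K) x = hsum r s K x + (s (r (Suc K)) - s (r K)) * max (x - r (Suc K)) 0"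
  by (simp add: hsum_def hc_def)

lemma hsum_0: "hsum r s 0 x = s (r 0) * max (x - r 0) 0"
  by (simp add: hsum_def hc_def)

lemma hsum_slope:
  assumes "mono r" "r K \<le> y" "y \<le> x"
  shows "hsum r s K x - hsum r s K y = s (r K) * (x - y)"
  using assms(2,3)
proof (induction K)
  case 0 then show ?case by (simp add: hsum_0 algebra_simps)
next
  case (Suc K)
  have "r K \<le> r (Suc K)" using assms(1) by (simp add: mono_def)
  with Suc have IH: "hsum r s K x - hsum r s K y = s (r K) * (x - y)" by auto
  have m1: "max (x - r (Suc K)) 0 = x - r (Suc K)" "max (y - r (Suc K)) 0 = y - r (Suc K)"
    using Suc.prems by auto
  show ?case using IH by (simp add: hsum_Suc m1 algebra_simps)
qed

lemma hsum_below:
  assumes "mono r" "x \<le> r (Suc K)"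
  shows "hsum r s (Suc K) x = hsum r s K x"
  using assms by (simp add: hsum_Suc max_def)

lemma hsum_left:
  assumes "mono r" "x \<le> r 0"
  shows "hsum r s K x = 0"
proof -
  have "\<And>k. x \<le> r k" using assms by (meson le0 monoD order_trans)
  then show ?thesis by (simp add: hsum_def max_def)
qed

lemma hsum_upper:
  assumes "mono r" and tang: "\<And>x y. \<phi> y \<ge> \<phi> x + s x * (y - x)" and "r 0 \<le> x"
  shows "hsum r s K x \<le> \<phi> x - \<phi> (r 0)"
  using assms(3)
proof (induction K arbitrary: x)
  case 0
  then show ?case using tang[of "r 0" x] by (simp add: hsum_0 max_def)
next
  case (Suc K)
  show ?case
  proof (cases "x \<le> r (Suc K)")
    case True then show ?thesis using Suc hsum_below[OF assms(1)] by simp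
  next
    case False
    have rK: "r K \<le> r (Suc K)" using assms(1) by (simp add: mono_def)
    have r0: "r 0 \<le> r (Suc K)" using assms(1) by (simp add: mono_def)
    have sl: "hsum r s K x - hsum r s K (r (Suc K)) = s (r K) * (x - r (Suc K))"
      using hsum_slope[OF assms(1) rK] False by simp
    have IH: "hsum r s K (r (Suc K)) \<le> \<phi> (r (Suc K)) - \<phi> (r 0)" using Suc.IH r0 by simp
    have "hsum r s (Suc K) x = hsum r s K (r (Suc K)) + s (r (Suc K)) * (x - r (Suc K))"
      using sl False by (simp add: hsum_Suc algebra_simps)
    also have "\<dots> \<le> \<phi> x - \<phi> (r 0)" using IH tang[of "r (Suc K)" x] by simp
    finally show ?thesis .
  qed
qed

lemma hsum_lower:
  assumes "mono r" and tang: "\<And>x y. \<phi> y \<ge> \<phi> x + s x * (y - x)"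
    and smono: "mono s"
    and gap: "\<And>k. r (Suc k) - r k \<le> \<delta>"
    and "r 0 \<le> x" "x \<le> r K"
  shows "hsum r s K x \<ge> \<phi> x - \<phi> (r 0) - (s x - s (r 0)) * \<delta>"
  using assms(5,6)
proof (induction K arbitrary: x)
  case 0
  then have "x = r 0" by simp
  then show ?case by (simp add: hsum_0)
next
  case (Suc K)
  show ?case
  proof (cases "x \<le> r K")
    case True then show ?thesis using Suc hsum_below[OF assms(1), of x K s] by simp
  next
    case False
    have rK: "r K \<le> r (Suc K)" using assms(1) by (simp add: mono_def)
    have r0: "r 0 \<le> r K" using assms(1) by (simp add: mono_def)
    have sl: "hsum r s K x - hsum r s K (r K) = s (r K) * (x - r K)"
      using hsum_slope[OF assms(1) order_refl] False by simp
    have IH: "hsum r s K (r K) \<ge> \<phi> (r K) - \<phi> (r 0) - (s (r K) - s (r 0)) * \<delta>" using Suc.IH r0 by simp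
    have e: "hsum r s (Suc K) x = hsum r s K x" using hsum_below[OF assms(1), of x K s] Suc.prems by simp
    have t: "\<phi> (r K) \<ge> \<phi> x + s x * (r K - x)" using tang .
    have sx: "s (r K) \<le> s x" using smono False by (simp add: mono_def)
    have g: "x - r K \<le> \<delta>" using gap[of K] Suc.prems by simp
    have "(s x - s (r K)) * (x - r K) \<le> (s x - s (r K)) * \<delta>"
      using sx g by (intro mult_left_mono) auto
    then show ?thesis using e sl IH t by (simp add: algebra_simps)
  qed
qed



lemma tang_mono:
  fixes \<phi> s :: "real \<Rightarrow> real"
  assumes tang: "\<And>x y. \<phi> y \<ge> \<phi> x + s x * (y - x)"
  shows "mono s"
proof (rule monoI)
  fix x y :: real assume "x \<le> y"
  have 1: "\<phi> y \<ge> \<phi> x + s x * (y - x)" and 2: "\<phi> x \<ge> \<phi> y + s y * (x - y)" using tang by auto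
  have "(s x - s y) * (y - x) \<le> 0" using 1 2 by (simp add: algebra_simps)
  then show "s x \<le> s y" using \<open>x \<le> y\<close>
    by (cases "x = y") (auto simp: mult_le_0_iff)
qed

lemma incr_dom:
  fixes S T :: "'a \<Rightarrow> real" and \<phi> s :: "real \<Rightarrow> real"
  assumes P: "prob_space M" and [measurable]: "S \<in> borel_measurable M" "T \<in> borel_measurable M"
    and hinge: "\<And>t. (\<integral>\<^sup>+x. ennreal (max (S x - t) 0) \<partial>M) \<le> (\<integral>\<^sup>+x. ennreal (max (T x - t) 0) \<partial>M)"
    and tang: "\<And>x y. \<phi> y \<ge> \<phi> x + s x * (y - x)"
    and spos: "\<And>x. s x \<ge> 0" and phipos: "\<And>x. \<phi> x \<ge> 0"
  shows "(\<integral>\<^sup>+x. ennreal (\<phi> (S x)) \<partial>M) \<le> (\<integral>\<^sup>+x. ennreal (\<phi> (T x)) \<partial>M)"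
proof -
  interpret prob_space M by fact
  have smono: "mono s" by (rule tang_mono[OF tang])
  have phimono: "\<phi> x \<le> \<phi> y" if "x \<le> y" for x y
    using tang[of x y] spos[of x] that by (smt (verit) mult_nonneg_nonneg)
  define L where "L = Inf (range \<phi>)"
  have bdd: "bdd_below (range \<phi>)" using phipos by (intro bdd_belowI[of _ 0]) auto
  have Lle: "L \<le> \<phi> x" for x unfolding L_def using bdd by (simp add: cInf_lower)
  have L0: "L \<ge> 0" unfolding L_def using phipos by (intro cINF_greatest) auto
  define r :: "nat \<Rightarrow> nat \<Rightarrow> real" where "r n k = - real n + real k / (real n + 1)" for n k
  define K :: "nat \<Rightarrow> nat" where "K n = 2 * n * (n + 1)" for n
  define Q where "Q n x = L + hsum (r n) s (K n) x" for n x
  have rmono: "mono (r n)" for n unfolding r_def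
    by (intro monoI) (auto simp: divide_right_mono)
  have r0: "r n 0 = - real n" for n by (simp add: r_def)
  have rK: "r n (K n) = real n" for n
  proof -
    have "real (K n) / (real n + 1) = 2 * real n"
      by (simp add: K_def field_simps)
    then show ?thesis by (simp add: r_def)
  qed
  have gap: "r n (Suc k) - r n k \<le> 1 / (real n + 1)" for n k
    by (simp add: r_def field_simps)
  have hc_nonneg: "hc (r n) s k \<ge> 0" for n k
    using spos smono rmono[of n] by (auto simp: hc_def mono_def)
  have Qle: "Q n x \<le> \<phi> x" for n x
  proof (cases "x \<le> r n 0")
    case True then show ?thesis using hsum_left[OF rmono True] Lle by (simp add: Q_def)
  next
    case False
    then have "hsum (r n) s (K n) x \<le> \<phi> x - \<phi> (r n 0)"
      using hsum_upper[OF rmono tang] by simp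
    then show ?thesis using Lle[of "r n 0"] by (simp add: Q_def)
  qed
  have philim: "(\<lambda>n. \<phi> (- real n)) \<longlonglongrightarrow> L"
  proof (rule order_tendstoI)
    fix a assume "a < L"
    then show "eventually (\<lambda>n. a < \<phi> (- real n)) sequentially" using Lle
      by (intro always_eventually) (auto intro: less_le_trans)
  next
    fix a assume "L < a"
    then obtain y where y: "\<phi> y < a" unfolding L_def
      by (metis cInf_lessD empty_not_UNIV image_is_empty rangeE)
    obtain N :: nat where N: "real N \<ge> - y" using real_arch_simple by blast
    show "eventually (\<lambda>n. \<phi> (- real n) < a) sequentially"
    proof (rule eventually_sequentiallyI[of N])
      fix n assume "N \<le> n"
      then have "- real n \<le> y" using N by linarith
      then show "\<phi> (- real n) < a" using phimono y by (meson le_less_trans)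
    qed
  qed
  have Qlim: "(\<lambda>n. Q n x) \<longlonglongrightarrow> \<phi> x" for x
  proof (rule tendsto_sandwich[where f = "\<lambda>n. \<phi> x - (\<phi> (- real n) - L) - s x * (1 / (real n + 1))"
        and h = "\<lambda>n. \<phi> x"])
    obtain N :: nat where N: "real N \<ge> \<bar>x\<bar>" using real_arch_simple by blast
    show "eventually (\<lambda>n. \<phi> x - (\<phi> (- real n) - L) - s x * (1 / (real n + 1)) \<le> Q n x) sequentially"
    proof (rule eventually_sequentiallyI[of N])
      fix n assume "N \<le> n"
      then have xin: "r n 0 \<le> x" "x \<le> r n (K n)" using N r0 rK by auto
      have "hsum (r n) s (K n) x \<ge> \<phi> x - \<phi> (r n 0) - (s x - s (r n 0)) * (1 / (real n + 1))"
        using hsum_lower[OF rmono tang smono gap xin] .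
      moreover have "(s x - s (r n 0)) * (1 / (real n + 1)) \<le> s x * (1 / (real n + 1))"
        using spos[of "r n 0"] by (intro mult_right_mono) auto
      ultimately show "\<phi> x - (\<phi> (- real n) - L) - s x * (1 / (real n + 1)) \<le> Q n x"
        by (simp add: Q_def r0)
    qed
    show "eventually (\<lambda>n. Q n x \<le> \<phi> x) sequentially" using Qle by simp
    show "(\<lambda>n. \<phi> x) \<longlonglongrightarrow> \<phi> x" by simp
    have inv: "(\<lambda>n. 1 / (real n + 1)) \<longlonglongrightarrow> 0"
      using LIMSEQ_inverse_real_of_nat by (simp add: inverse_eq_divide add.commute)
    have "(\<lambda>n. \<phi> x - (\<phi> (- real n) - L) - s x * (1 / (real n + 1))) \<longlonglongrightarrow> \<phi> x - (L - L) - s x * 0"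
      by (intro tendsto_intros philim inv) 
    then show "(\<lambda>n. \<phi> x - (\<phi> (- real n) - L) - s x * (1 / (real n + 1))) \<longlonglongrightarrow> \<phi> x" by simp
  qed
  have Qint: "(\<integral>\<^sup>+x. ennreal (Q n (U x)) \<partial>M) = ennreal L +
      (\<Sum>k\<le>K n. ennreal (hc (r n) s k) * (\<integral>\<^sup>+x. ennreal (max (U x - r n k) 0) \<partial>M))"
    if [measurable]: "U \<in> borel_measurable M" for n U
  proof -
    have "(\<integral>\<^sup>+x. ennreal (Q n (U x)) \<partial>M) =
       (\<integral>\<^sup>+x. ennreal L + (\<Sum>k\<le>K n. ennreal (hc (r n) s k) * ennreal (max (U x - r n k) 0)) \<partial>M)"
    proof (intro nn_integral_cong)
      fix x
      have "ennreal (hsum (r n) s (K n) (U x)) = (\<Sum>k\<le>K n. ennreal (hc (r n) s k * max (U x - r n k) 0))"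
        unfolding hsum_def by (rule sum_ennreal[symmetric]) (simp add: hc_nonneg)
      also have "\<dots> = (\<Sum>k\<le>K n. ennreal (hc (r n) s k) * ennreal (max (U x - r n k) 0))"
        by (intro sum.cong refl ennreal_mult) (auto simp: hc_nonneg)
      finally show "ennreal (Q n (U x)) = ennreal L + (\<Sum>k\<le>K n. ennreal (hc (r n) s k) * ennreal (max (U x - r n k) 0))"
        unfolding Q_def using L0 by (subst ennreal_plus) (auto simp: hsum_def sum_nonneg hc_nonneg)
    qed
    also have "\<dots> = ennreal L + (\<Sum>k\<le>K n. ennreal (hc (r n) s k) * (\<integral>\<^sup>+x. ennreal (max (U x - r n k) 0) \<partial>M))"
      by (simp add: nn_integral_add nn_integral_sum nn_integral_cmult emeasure_space_1)
    finally show ?thesis .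
  qed
  have Qmono: "(\<integral>\<^sup>+x. ennreal (Q n (S x)) \<partial>M) \<le> (\<integral>\<^sup>+x. ennreal (Q n (T x)) \<partial>M)" for n
    unfolding Qint[OF assms(2)] Qint[OF assms(3)]
    by (intro add_left_mono sum_mono mult_left_mono hinge) (auto)
  have "(\<integral>\<^sup>+x. ennreal (\<phi> (S x)) \<partial>M) = (\<integral>\<^sup>+x. liminf (\<lambda>n. ennreal (Q n (S x))) \<partial>M)"
    by (intro nn_integral_cong lim_imp_Liminf[symmetric] tendsto_ennrealI Qlim) auto
  also have "\<dots> \<le> liminf (\<lambda>n. \<integral>\<^sup>+x. ennreal (Q n (S x)) \<partial>M)"
    by (intro nn_integral_liminf) (simp add: Q_def hsum_def)
  also have "\<dots> \<le> liminf (\<lambda>n. \<integral>\<^sup>+x. ennreal (Q n (T x)) \<partial>M)"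
    by (intro Liminf_mono) (simp add: Qmono)
  also have "\<dots> \<le> (\<integral>\<^sup>+x. ennreal (\<phi> (T x)) \<partial>M)"
    by (intro Liminf_le always_eventually allI nn_integral_mono ennreal_leI Qle) auto
  finally show ?thesis .
qed



lemma decr_dom:
  fixes S T :: "'a \<Rightarrow> real" and \<phi> s :: "real \<Rightarrow> real"
  assumes P: "prob_space M" and [measurable]: "S \<in> borel_measurable M" "T \<in> borel_measurable M"
    and hinge: "\<And>t. (\<integral>\<^sup>+x. ennreal (max (t - S x) 0) \<partial>M) \<le> (\<integral>\<^sup>+x. ennreal (max (t - T x) 0) \<partial>M)"
    and tang: "\<And>x y. \<phi> y \<ge> \<phi> x + s x * (y - x)"
    and sneg: "\<And>x. s x \<le> 0" and phipos: "\<And>x. \<phi> x \<ge> 0"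
  shows "(\<integral>\<^sup>+x. ennreal (\<phi> (S x)) \<partial>M) \<le> (\<integral>\<^sup>+x. ennreal (\<phi> (T x)) \<partial>M)"
proof -
  have "(\<integral>\<^sup>+x. ennreal ((\<lambda>y. \<phi> (- y)) ((\<lambda>x. - S x) x)) \<partial>M) \<le> (\<integral>\<^sup>+x. ennreal ((\<lambda>y. \<phi> (- y)) ((\<lambda>x. - T x) x)) \<partial>M)"
  proof (rule incr_dom[OF P, where s = "\<lambda>x. - s (- x)" and S = "\<lambda>x. - S x" and T = "\<lambda>x. - T x" and \<phi> = "\<lambda>y. \<phi> (- y)"])
    show "(\<lambda>x. - S x) \<in> borel_measurable M" "(\<lambda>x. - T x) \<in> borel_measurable M" by auto
    fix t
    show "(\<integral>\<^sup>+x. ennreal (max (- S x - t) 0) \<partial>M) \<le> (\<integral>\<^sup>+x. ennreal (max (- T x - t) 0) \<partial>M)"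
    proof -
      have e: "\<And>y::real. - y - t = - t - y" by simp
      show ?thesis using hinge[of "- t"] by (simp only: e)
    qed
  next
    fix x y :: real
    show "\<phi> (- y) \<ge> \<phi> (- x) + - s (- x) * (y - x)" using tang[of "- x" "- y"] by (simp add: algebra_simps)
  qed (use sneg phipos in auto)
  then show ?thesis by simp
qed

lemma convex_tangent:
  fixes w :: "real \<Rightarrow> real"
  assumes "convex_on UNIV w"
  obtains s where "\<And>x y. w y \<ge> w x + s x * (y - x)"
proof
  fix x y
  show "w y \<ge> w x + Inf ((\<lambda>t. (w x - w t) / (x - t)) ` ({x<..} \<inter> UNIV)) * (y - x)"
    by (rule convex_le_Inf_differential[OF assms]) auto
qed

lemma convex_dom:
  fixes S T :: "'a \<Rightarrow> real" and w :: "real \<Rightarrow> real"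
  assumes P: "prob_space M" and [measurable]: "S \<in> borel_measurable M" "T \<in> borel_measurable M"
    and hinge1: "\<And>t. (\<integral>\<^sup>+x. ennreal (max (S x - t) 0) \<partial>M) \<le> (\<integral>\<^sup>+x. ennreal (max (T x - t) 0) \<partial>M)"
    and hinge2: "\<And>t. (\<integral>\<^sup>+x. ennreal (max (t - S x) 0) \<partial>M) \<le> (\<integral>\<^sup>+x. ennreal (max (t - T x) 0) \<partial>M)"
    and cvx: "convex_on UNIV w" and wpos: "\<And>x. w x \<ge> 0"
  shows "(\<integral>\<^sup>+x. ennreal (w (S x)) \<partial>M) \<le> (\<integral>\<^sup>+x. ennreal (w (T x)) \<partial>M)"
proof -
  interpret prob_space M by fact
  obtain s where tang: "\<And>x y. w y \<ge> w x + s x * (y - x)" using convex_tangent[OF cvx] by blast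
  have smono: "mono s" by (rule tang_mono[OF tang])
  have wcont: "continuous_on UNIV w" by (rule convex_on_continuous[OF open_UNIV cvx])
  have wbor[measurable]: "w \<in> borel_measurable borel" by (rule borel_measurable_continuous_onI[OF wcont])
  show ?thesis
  proof (cases "\<forall>x. s x \<ge> 0")
    case True
    then show ?thesis using incr_dom[OF P assms(2,3) hinge1 tang] wpos by auto
  next
    case False
    then obtain a where a: "s a < 0" by (auto simp: not_le)
    show ?thesis
    proof (cases "\<forall>x. s x \<le> 0")
      case True
      then show ?thesis using decr_dom[OF P assms(2,3) hinge2 tang] wpos by auto
    next
      case False
      then obtain b where b: "s b > 0" by (auto simp: not_le)
      define N where "N = {x. s x < 0}"
      define m where "m = Sup N"
      have aN: "a \<in> N" using a by (simp add: N_def)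
      have Nb: "x < b" if "x \<in> N" for x
      proof (rule ccontr)
        assume "\<not> x < b"
        then have "s b \<le> s x" using smono by (simp add: mono_def not_less)
        then show False using that b by (simp add: N_def)
      qed
      have bddN: "bdd_above N" using Nb by (meson bdd_above.unfold less_imp_le)
      have left: "s x < 0" if xm: "x < m" for x
      proof -
        obtain n where "n \<in> N" "x < n" using less_cSupD[of N x] aN xm unfolding m_def by blast
        then show ?thesis using smono unfolding N_def mono_def by (metis le_less_trans less_imp_le mem_Collect_eq)
      qed
      have right: "s x \<ge> 0" if "m < x" for x
      proof (rule ccontr)
        assume "\<not> s x \<ge> 0"
        then have "x \<in> N" by (simp add: N_def)
        then have "x \<le> m" unfolding m_def using bddN by (rule cSup_upper)
        then show False using that by simp
      qed
      have wlim: "(w \<longlongrightarrow> w m) (at m)" using wcont by (simp add: continuous_on_def)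
      have geR: "w y \<ge> w m" if "m < y" for y
      proof -
        have "(w \<longlongrightarrow> w m) (at_right m)" using wlim by (simp add: filterlim_at_split)
        moreover have "eventually (\<lambda>z. w z \<le> w y) (at_right m)"
          unfolding eventually_at_right_field
        proof (intro exI[of _ y] conjI allI impI)
          fix z assume "m < z" "z < y"
          then show "w z \<le> w y" using tang[of z y] right[of z] by (smt (verit) mult_nonneg_nonneg)
        qed (use that in auto)
        ultimately show ?thesis by (intro tendsto_upperbound) auto
      qed
      have geL: "w y \<ge> w m" if "y < m" for y
      proof -
        have "(w \<longlongrightarrow> w m) (at_left m)" using wlim by (simp add: filterlim_at_split)
        moreover have "eventually (\<lambda>z. w z \<le> w y) (at_left m)"
          unfolding eventually_at_left_field
        proof (intro exI[of _ y] conjI allI impI)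
          fix z assume "y < z" "z < m"
          then show "w z \<le> w y" using tang[of z y] left[of z] by (smt (verit) mult_nonpos_nonpos)
        qed (use that in auto)
        ultimately show ?thesis by (intro tendsto_upperbound) auto
      qed
      define \<phi>1 where "\<phi>1 x = w (max x m) - w m" for x
      define s1 where "s1 x = (if x \<le> m then 0 else s x)" for x
      define \<phi>2 where "\<phi>2 x = w (min x m) - w m" for x
      define s2 where "s2 x = (if m \<le> x then 0 else s x)" for x
      have p1: "\<phi>1 x \<ge> 0" for x using geR[of "max x m"] by (cases "x \<le> m") (auto simp: \<phi>1_def max_def)
      have p2: "\<phi>2 x \<ge> 0" for x using geL[of "min x m"] by (cases "m \<le> x") (auto simp: \<phi>2_def min_def)
      have t1: "\<phi>1 y \<ge> \<phi>1 x + s1 x * (y - x)" for x y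
      proof (cases "x \<le> m")
        case True then show ?thesis using p1[of y] by (simp add: s1_def \<phi>1_def max_def)
      next
        case False
        have sx: "s x \<ge> 0" using right False by simp
        show ?thesis
        proof (cases "m \<le> y")
          case True then show ?thesis using tang[of x y] False by (simp add: s1_def \<phi>1_def max_def)
        next
          case False2: False
          have "w m \<ge> w x + s x * (m - x)" by (rule tang)
          moreover have "s x * (y - m) \<le> 0" using sx False2 by (simp add: mult_nonneg_nonpos)
          ultimately show ?thesis using False False2 by (simp add: s1_def \<phi>1_def max_def algebra_simps)
        qed
      qed
      have t2: "\<phi>2 y \<ge> \<phi>2 x + s2 x * (y - x)" for x y
      proof (cases "m \<le> x")
        case True then show ?thesis using p2[of y] by (auto simp: s2_def \<phi>2_def min_def split: if_splits)
      next
        case False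
        have sx: "s x \<le> 0" using left False by (simp add: less_imp_le)
        show ?thesis
        proof (cases "y \<le> m")
          case True then show ?thesis using tang[of x y] False by (simp add: s2_def \<phi>2_def min_def)
        next
          case False2: False
          have "w m \<ge> w x + s x * (m - x)" by (rule tang)
          moreover have "s x * (y - m) \<le> 0" using sx False2 by (simp add: mult_nonpos_nonneg)
          ultimately show ?thesis using False False2 by (simp add: s2_def \<phi>2_def min_def algebra_simps)
        qed
      qed
      have s1pos: "s1 x \<ge> 0" for x using right by (simp add: s1_def)
      have s2neg: "s2 x \<le> 0" for x using left by (simp add: s2_def less_imp_le)
      have wm: "w m \<ge> 0" by (rule wpos)
      have decomp: "ennreal (w x) = ennreal (w m) + ennreal (\<phi>1 x) + ennreal (\<phi>2 x)" for x
      proof -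
        have "w x = w m + \<phi>1 x + \<phi>2 x" by (auto simp: \<phi>1_def \<phi>2_def max_def min_def)
        moreover have "ennreal (w m + \<phi>1 x + \<phi>2 x) = ennreal (w m + \<phi>1 x) + ennreal (\<phi>2 x)"
          using p1[of x] p2[of x] wm by (intro ennreal_plus) auto
        moreover have "ennreal (w m + \<phi>1 x) = ennreal (w m) + ennreal (\<phi>1 x)"
          using p1[of x] wm by (intro ennreal_plus) auto
        ultimately show ?thesis by simp
      qed
      have mb1[measurable]: "\<phi>1 \<in> borel_measurable borel" unfolding \<phi>1_def by measurable
      have mb2[measurable]: "\<phi>2 \<in> borel_measurable borel" unfolding \<phi>2_def by measurable
      have int: "(\<integral>\<^sup>+x. ennreal (w (U x)) \<partial>M) = ennreal (w m) + (\<integral>\<^sup>+x. ennreal (\<phi>1 (U x)) \<partial>M) + (\<integral>\<^sup>+x. ennreal (\<phi>2 (U x)) \<partial>M)"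
        if [measurable]: "U \<in> borel_measurable M" for U
      proof -
        have "(\<integral>\<^sup>+x. ennreal (w (U x)) \<partial>M) = (\<integral>\<^sup>+x. ennreal (w m) + ennreal (\<phi>1 (U x)) + ennreal (\<phi>2 (U x)) \<partial>M)"
          by (intro nn_integral_cong) (rule decomp)
        also have "\<dots> = ennreal (w m) + (\<integral>\<^sup>+x. ennreal (\<phi>1 (U x)) \<partial>M) + (\<integral>\<^sup>+x. ennreal (\<phi>2 (U x)) \<partial>M)"
          by (simp add: nn_integral_add emeasure_space_1 del: ennreal_plus)
        finally show ?thesis .
      qed
      have i1: "(\<integral>\<^sup>+x. ennreal (\<phi>1 (S x)) \<partial>M) \<le> (\<integral>\<^sup>+x. ennreal (\<phi>1 (T x)) \<partial>M)"
        by (rule incr_dom[OF P assms(2,3) hinge1 t1 s1pos p1])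
      have i2: "(\<integral>\<^sup>+x. ennreal (\<phi>2 (S x)) \<partial>M) \<le> (\<integral>\<^sup>+x. ennreal (\<phi>2 (T x)) \<partial>M)"
        by (rule decr_dom[OF P assms(2,3) hinge2 t2 s2neg p2])
      show ?thesis unfolding int[OF assms(2)] int[OF assms(3)]
        using i1 i2 by (intro add_mono) auto
    qed
  qed
qed



context
  fixes M :: "'a measure" and f :: "'a \<Rightarrow> real"
  assumes P: "prob_space M" and fm[measurable]: "f \<in> borel_measurable M"
begin

definition "tn n = (\<integral>x. min (max (- f x) 0) (real n) \<partial>M)"

lemma tn_int: "integrable M (\<lambda>x. min (max (- f x) 0) (real n))"
proof -
  interpret prob_space M by (rule P)
  show ?thesis
    by (rule integrable_const_bound[where B = "real n"]) auto
qed

lemma tn_bounds: "0 \<le> tn n" "tn n \<le> real n"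
proof -
  interpret prob_space M by (rule P)
  show "0 \<le> tn n" unfolding tn_def by (intro integral_nonneg_AE) auto
  have "tn n \<le> (\<integral>x. real n \<partial>M)" unfolding tn_def
    by (intro integral_mono tn_int) auto
  then show "tn n \<le> real n" by (simp add: prob_space.prob_space[OF P])
qed

lemma tn_nn: "ennreal (tn n) = (\<integral>\<^sup>+x. ennreal (min (max (- f x) 0) (real n)) \<partial>M)"
  unfolding tn_def by (rule nn_integral_eq_integral[symmetric]) (auto intro: tn_int)

lemma tn_le: "ennreal (tn n) \<le> neg_part_exp M f"
  unfolding tn_nn neg_part_exp_def by (intro nn_integral_mono ennreal_leI) auto

lemma tn_sup: "neg_part_exp M f = (SUP n. ennreal (tn n))"
proof -
  have "neg_part_exp M f = (\<integral>\<^sup>+x. (SUP n. ennreal (min (max (- f x) 0) (real n))) \<partial>M)"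
    unfolding neg_part_exp_def
  proof (intro nn_integral_cong antisym)
    fix x
    obtain n :: nat where "real n \<ge> max (- f x) 0" using real_arch_simple by blast
    then have "ennreal (max (- f x) 0) = ennreal (min (max (- f x) 0) (real n))" by simp
    then show "ennreal (max (- f x) 0) \<le> (SUP n. ennreal (min (max (- f x) 0) (real n)))"
      by (metis SUP_upper UNIV_I)
    show "(SUP n. ennreal (min (max (- f x) 0) (real n))) \<le> ennreal (max (- f x) 0)"
      by (intro SUP_least ennreal_leI) auto
  qed
  also have "\<dots> = (SUP n. \<integral>\<^sup>+x. ennreal (min (max (- f x) 0) (real n)) \<partial>M)"
    by (rule nn_integral_monotone_convergence_SUP)
       (auto simp: incseq_def le_fun_def intro!: ennreal_leI min.mono)
  finally show ?thesis by (simp add: tn_nn)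
qed

lemma trunc_repr:
  "(\<integral>\<^sup>+x. ennreal (max (f x) (- real n) + real n) \<partial>M) = pos_part_exp M f + ennreal (real n - tn n)"
proof -
  interpret prob_space M by (rule P)
  have "(\<integral>\<^sup>+x. ennreal (max (f x) (- real n) + real n) \<partial>M) =
        (\<integral>\<^sup>+x. ennreal (max (f x) 0) + ennreal (real n - min (max (- f x) 0) (real n)) \<partial>M)"
  proof (intro nn_integral_cong)
    fix x
    have "max (f x) (- real n) + real n = max (f x) 0 + (real n - min (max (- f x) 0) (real n))"
      by (auto simp: max_def min_def)
    then show "ennreal (max (f x) (- real n) + real n) = ennreal (max (f x) 0) + ennreal (real n - min (max (- f x) 0) (real n))"
      by (subst (asm) eq_commute, simp only:, intro ennreal_plus) auto
  qed
  also have "\<dots> = pos_part_exp M f + (\<integral>\<^sup>+x. ennreal (real n - min (max (- f x) 0) (real n)) \<partial>M)"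
    unfolding pos_part_exp_def by (simp add: nn_integral_add del: ennreal_plus)
  also have "(\<integral>\<^sup>+x. ennreal (real n - min (max (- f x) 0) (real n)) \<partial>M) = ennreal (\<integral>x. real n - min (max (- f x) 0) (real n) \<partial>M)"
    by (rule nn_integral_eq_integral) (auto intro!: tn_int)
  also have "(\<integral>x. real n - min (max (- f x) 0) (real n) \<partial>M) = real n - tn n"
    unfolding tn_def using tn_int by (simp add: prob_space)
  finally show ?thesis .
qed

end

lemma convex_max_const:
  fixes u :: "real \<Rightarrow> real"
  assumes "convex_on UNIV u"
  shows "convex_on UNIV (\<lambda>x. max (u x) c + d)"
  unfolding convex_on_def
proof (intro conjI convex_UNIV ballI allI impI)
  fix x y :: real and a b :: real
  assume ab: "0 \<le> a" "0 \<le> b" "a + b = 1"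
  have 1: "u (a *\<^sub>R x + b *\<^sub>R y) \<le> a * u x + b * u y" using assms ab by (auto simp: convex_on_def)
  have 2: "a * u x \<le> a * max (u x) c" "b * u y \<le> b * max (u y) c"
    "a * c \<le> a * max (u x) c" "b * c \<le> b * max (u y) c"
    using ab by (auto intro: mult_left_mono)
  have 3: "c = a * c + b * c" "d = a * d + b * d" using ab by (metis distrib_right mult_1)+
  have "max (u (a *\<^sub>R x + b *\<^sub>R y)) c \<le> a * max (u x) c + b * max (u y) c"
    using 1 2 3 by (intro max.boundedI) linarith+
  then show "max (u (a *\<^sub>R x + b *\<^sub>R y)) c + d \<le> a * (max (u x) c + d) + b * (max (u y) c + d)"
  proof -
    have "a * (max (u x) c + d) + b * (max (u y) c + d) = (a * max (u x) c + b * max (u y) c) + (a * d + b * d)"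
      by (simp add: algebra_simps)
    then show ?thesis using 3(2) \<open>max (u (a *\<^sub>R x + b *\<^sub>R y)) c \<le> _\<close> by linarith
  qed
qed

lemma ext_exp_dom:
  fixes S T :: "'a \<Rightarrow> real" and u :: "real \<Rightarrow> real"
  assumes P: "prob_space M" and [measurable]: "S \<in> borel_measurable M" "T \<in> borel_measurable M"
    and hinge1: "\<And>t. (\<integral>\<^sup>+x. ennreal (max (S x - t) 0) \<partial>M) \<le> (\<integral>\<^sup>+x. ennreal (max (T x - t) 0) \<partial>M)"
    and hinge2: "\<And>t. (\<integral>\<^sup>+x. ennreal (max (t - S x) 0) \<partial>M) \<le> (\<integral>\<^sup>+x. ennreal (max (t - T x) 0) \<partial>M)"
    and cvx: "convex_on UNIV u"
    and wdS: "exp_well_defined M (\<lambda>x. u (S x))" and wdT: "exp_well_defined M (\<lambda>x. u (T x))"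
  shows "ext_expectation M (\<lambda>x. u (S x)) \<le> ext_expectation M (\<lambda>x. u (T x))"
proof -
  have ucont: "continuous_on UNIV u" by (rule convex_on_continuous[OF open_UNIV cvx])
  have [measurable]: "u \<in> borel_measurable borel" by (rule borel_measurable_continuous_onI[OF ucont])
  have mS[measurable]: "(\<lambda>x. u (S x)) \<in> borel_measurable M" and mT[measurable]: "(\<lambda>x. u (T x)) \<in> borel_measurable M"
    by auto
  define pS where "pS = pos_part_exp M (\<lambda>x. u (S x))"
  define pT where "pT = pos_part_exp M (\<lambda>x. u (T x))"
  define nS where "nS = neg_part_exp M (\<lambda>x. u (S x))"
  define nT where "nT = neg_part_exp M (\<lambda>x. u (T x))"
  define aS where "aS = tn M (\<lambda>x. u (S x))"
  define aT where "aT = tn M (\<lambda>x. u (T x))"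
  have key: "pS + ennreal (real n - aS n) \<le> pT + ennreal (real n - aT n)" for n
  proof -
    have "(\<integral>\<^sup>+x. ennreal ((\<lambda>y. max (u y) (- real n) + real n) (S x)) \<partial>M) \<le>
          (\<integral>\<^sup>+x. ennreal ((\<lambda>y. max (u y) (- real n) + real n) (T x)) \<partial>M)"
      by (rule convex_dom[OF P assms(2,3) hinge1 hinge2 convex_max_const[OF cvx]]) auto
    then show ?thesis
      unfolding pS_def pT_def aS_def aT_def using trunc_repr[OF P mS, of n] trunc_repr[OF P mT, of n] by simp
  qed
  have aSb: "0 \<le> aS n" "aS n \<le> real n" for n unfolding aS_def using tn_bounds[OF P mS] by auto
  have aTb: "0 \<le> aT n" "aT n \<le> real n" for n unfolding aT_def using tn_bounds[OF P mT] by auto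
  have aSle: "ennreal (aS n) \<le> nS" for n unfolding aS_def nS_def by (rule tn_le[OF P mS])
  have nTsup: "nT = (SUP n. ennreal (aT n))" unfolding aT_def nT_def by (rule tn_sup[OF P mT])
  show ?thesis
  proof (cases "pT = \<infinity>")
    case True
    then have "nT < \<infinity>" using wdT by (simp add: exp_well_defined_def pT_def nT_def)
    then obtain nt where "nT = ennreal nt" by (cases nT) auto
    then show ?thesis using True
      by (simp add: ext_expectation_def pT_def[symmetric] nT_def[symmetric])
  next
    case False
    then obtain pt where pt: "pT = ennreal pt" "pt \<ge> 0" by (cases pT) auto
    have "pS \<le> pT + ennreal (real 0 - aT 0)" by (rule order_trans[OF _ key[of 0]]) simp
    then have "pS < \<infinity>" using pt aTb[of 0] by (simp add: ennreal_plus[symmetric] del: ennreal_plus)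
        (meson ennreal_less_top order.strict_trans1)
    then obtain ps where ps: "pS = ennreal ps" "ps \<ge> 0" by (cases pS) auto
    show ?thesis
    proof (cases "nS = \<infinity>")
      case True
      then show ?thesis by (simp add: ext_expectation_def pS_def[symmetric] nS_def[symmetric] ps)
    next
      case False
      then obtain ns where ns: "nS = ennreal ns" "ns \<ge> 0" by (cases nS) auto
      have aTle: "aT n \<le> pt - ps + ns" for n
      proof -
        have "ps + (real n - aS n) \<le> pt + (real n - aT n)"
          using key[of n] pt ps aSb[of n] aTb[of n]
          by (simp add: ennreal_plus[symmetric] del: ennreal_plus)
        moreover have "aS n \<le> ns" using aSle[of n] ns aSb[of n] by simp
        ultimately show ?thesis by simp
      qed
      have "nT \<le> ennreal (pt - ps + ns)" unfolding nTsup
        by (intro SUP_least ennreal_leI aTle)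
      moreover have "pt - ps + ns \<ge> 0" using aTle[of 0] aTb[of 0] by simp
      ultimately obtain nt where nt: "nT = ennreal nt" "nt \<ge> 0" "nt \<le> pt - ps + ns"
        by (cases nT) (auto simp: ennreal_le_iff2 top_unique)
      show ?thesis
        by (simp add: ext_expectation_def pS_def[symmetric] nS_def[symmetric] pT_def[symmetric] nT_def[symmetric]
            ps pt ns nt) (insert nt(3), linarith)
    qed
  qed
qed



lemma chain_sup:
  fixes y :: "nat \<Rightarrow> 'a \<Rightarrow> real"
  assumes ne: "A \<noteq> {}"
    and ord: "\<And>\<omega> \<omega>' i. \<omega> \<in> A \<Longrightarrow> \<omega>' \<in> A \<Longrightarrow> (\<Sum>i<d. y i \<omega>) \<le> (\<Sum>i<d. y i \<omega>') \<Longrightarrow> i < d \<Longrightarrow> y i \<omega> \<le> y i \<omega>'"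
    and le: "\<And>\<omega>. \<omega> \<in> A \<Longrightarrow> (\<Sum>i<d. y i \<omega>) \<le> t"
  shows "\<exists>a. (\<forall>i<d. \<forall>\<omega>\<in>A. y i \<omega> \<le> a i) \<and> (\<forall>i<d. \<forall>c. (\<forall>\<omega>\<in>A. y i \<omega> \<le> c) \<longrightarrow> a i \<le> c) \<and> (\<Sum>i<d. a i) \<le> t"
proof -
  obtain \<omega>0 where w0: "\<omega>0 \<in> A" using ne by blast
  have bdd: "bdd_above (y i ` A)" if i: "i < d" for i
  proof (rule bdd_aboveI2)
    fix \<omega> assume w: "\<omega> \<in> A"
    show "y i \<omega> \<le> max (y i \<omega>0) (t - (\<Sum>j\<in>{..<d} - {i}. y j \<omega>0))"
    proof (cases "(\<Sum>i<d. y i \<omega>) \<le> (\<Sum>i<d. y i \<omega>0)")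
      case True then show ?thesis using ord[OF w w0 True i] by simp
    next
      case False
      then have ge: "\<And>j. j < d \<Longrightarrow> y j \<omega>0 \<le> y j \<omega>" using ord[OF w0 w] by simp
      have "(\<Sum>j<d. y j \<omega>) = y i \<omega> + (\<Sum>j\<in>{..<d} - {i}. y j \<omega>)"
        using i by (simp add: sum.remove)
      moreover have "(\<Sum>j\<in>{..<d} - {i}. y j \<omega>0) \<le> (\<Sum>j\<in>{..<d} - {i}. y j \<omega>)"
        using ge by (intro sum_mono) auto
      ultimately show ?thesis using le[OF w] by simp
    qed
  qed
  define a where "a i = Sup (y i ` A)" for i
  have ub: "y i \<omega> \<le> a i" if "i < d" "\<omega> \<in> A" for i \<omega>
    unfolding a_def using bdd[OF that(1)] that(2) by (simp add: cSup_upper)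
  have lub: "a i \<le> c" if "\<forall>\<omega>\<in>A. y i \<omega> \<le> c" for i c
    unfolding a_def using that ne by (intro cSup_least) auto
  have sumle: "(\<Sum>i<d. a i) \<le> t"
  proof (rule field_le_epsilon)
    fix e :: real assume e: "0 < e"
    show "(\<Sum>i<d. a i) \<le> t + e"
    proof (cases "d = 0")
      case True then show ?thesis using le[OF w0] e by simp
    next
      case False
      have "\<exists>\<omega>\<in>A. a i - e / d < y i \<omega>" if "i < d" for i
      proof -
        have "a i - e / d < a i" using e False by simp
        then show ?thesis unfolding a_def using ne
          by (subst (asm) less_cSup_iff[OF _ bdd[OF that]]) auto
      qed
      then obtain W where W: "\<And>i. i < d \<Longrightarrow> W i \<in> A \<and> a i - e / d < y i (W i)" by metis
      define F where "F = W ` {..<d}"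
      have Ffin: "finite F" "F \<noteq> {}" using False by (auto simp: F_def)
      define mx where "mx = Max ((\<lambda>\<omega>. \<Sum>i<d. y i \<omega>) ` F)"
      have "mx \<in> (\<lambda>\<omega>. \<Sum>i<d. y i \<omega>) ` F" unfolding mx_def using Ffin by (intro Max_in) auto
      then obtain ws where ws: "ws \<in> F" "(\<Sum>i<d. y i ws) = mx" by auto
      have wsA: "ws \<in> A" using ws W by (auto simp: F_def)
      have "y i (W i) \<le> y i ws" if "i < d" for i
      proof (rule ord)
        show "W i \<in> A" using W that by auto
        have "W i \<in> F" using that by (auto simp: F_def)
        then show "(\<Sum>j<d. y j (W i)) \<le> (\<Sum>j<d. y j ws)" unfolding ws(2) mx_def
          using Ffin by (intro Max_ge) auto
      qed (use wsA that in auto)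
      then have "(\<Sum>i<d. a i - e / d) \<le> (\<Sum>i<d. y i ws)"
        using W by (intro sum_mono) (meson less_imp_le order.trans lessThan_iff)
      also have "\<dots> \<le> t" using le[OF wsA] .
      finally show ?thesis using False by (simp add: sum_subtractf)
    qed
  qed
  show ?thesis using ub lub sumle by blast
qed

lemma chain_inf:
  fixes y :: "nat \<Rightarrow> 'a \<Rightarrow> real"
  assumes ne: "B \<noteq> {}"
    and ord: "\<And>\<omega> \<omega>' i. \<omega> \<in> B \<Longrightarrow> \<omega>' \<in> B \<Longrightarrow> (\<Sum>i<d. y i \<omega>) \<le> (\<Sum>i<d. y i \<omega>') \<Longrightarrow> i < d \<Longrightarrow> y i \<omega> \<le> y i \<omega>'"
    and ge: "\<And>\<omega>. \<omega> \<in> B \<Longrightarrow> t \<le> (\<Sum>i<d. y i \<omega>)"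
  shows "\<exists>b. (\<forall>i<d. \<forall>\<omega>\<in>B. b i \<le> y i \<omega>) \<and> (\<forall>i<d. \<forall>c. (\<forall>\<omega>\<in>B. c \<le> y i \<omega>) \<longrightarrow> c \<le> b i) \<and> t \<le> (\<Sum>i<d. b i)"
proof -
  have "\<exists>a. (\<forall>i<d. \<forall>\<omega>\<in>B. - y i \<omega> \<le> a i) \<and> (\<forall>i<d. \<forall>c. (\<forall>\<omega>\<in>B. - y i \<omega> \<le> c) \<longrightarrow> a i \<le> c) \<and> (\<Sum>i<d. a i) \<le> - t"
  proof (rule chain_sup[where y = "\<lambda>i \<omega>. - y i \<omega>", OF ne])
    fix \<omega> \<omega>' i assume "\<omega> \<in> B" "\<omega>' \<in> B" "(\<Sum>i<d. - y i \<omega>) \<le> (\<Sum>i<d. - y i \<omega>')" "i < d"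
    then show "- y i \<omega> \<le> - y i \<omega>'" using ord[of \<omega>' \<omega> i] by (simp add: sum_negf)
  next
    fix \<omega> assume "\<omega> \<in> B" then show "(\<Sum>i<d. - y i \<omega>) \<le> - t" using ge by (simp add: sum_negf)
  qed
  then obtain a where a: "\<forall>i<d. \<forall>\<omega>\<in>B. - y i \<omega> \<le> a i" "\<forall>i<d. \<forall>c. (\<forall>\<omega>\<in>B. - y i \<omega> \<le> c) \<longrightarrow> a i \<le> c"
    "(\<Sum>i<d. a i) \<le> - t" by blast
  show ?thesis
  proof (intro exI[of _ "\<lambda>i. - a i"] conjI allI impI ballI)
    fix i \<omega> assume "i < d" "\<omega> \<in> B" then show "- a i \<le> y i \<omega>" using a(1) by force
  next
    fix i c assume "i < d" "\<forall>\<omega>\<in>B. c \<le> y i \<omega>"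
    then show "c \<le> - a i" using a(2)[rule_format, of i "- c"] by force
  next
    show "t \<le> (\<Sum>i<d. - a i)" using a(3) by (simp add: sum_negf)
  qed
qed

lemma thresholds:
  fixes y :: "nat \<Rightarrow> 'a \<Rightarrow> real"
  assumes d: "d > 0"
    and ord: "\<And>\<omega> \<omega>' i. \<omega> \<in> G \<Longrightarrow> \<omega>' \<in> G \<Longrightarrow> (\<Sum>i<d. y i \<omega>) \<le> (\<Sum>i<d. y i \<omega>') \<Longrightarrow> i < d \<Longrightarrow> y i \<omega> \<le> y i \<omega>'"
  shows "\<exists>\<tau>. (\<Sum>i<d. \<tau> i) = t \<and> (\<forall>\<omega>\<in>G. (\<Sum>i<d. y i \<omega>) \<le> t \<longrightarrow> (\<forall>i<d. y i \<omega> \<le> \<tau> i))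
            \<and> (\<forall>\<omega>\<in>G. t < (\<Sum>i<d. y i \<omega>) \<longrightarrow> (\<forall>i<d. \<tau> i \<le> y i \<omega>))"
proof -
  define A where "A = {\<omega>\<in>G. (\<Sum>i<d. y i \<omega>) \<le> t}"
  define B where "B = {\<omega>\<in>G. t < (\<Sum>i<d. y i \<omega>)}"
  have ordA: "\<And>\<omega> \<omega>' i. \<omega> \<in> A \<Longrightarrow> \<omega>' \<in> A \<Longrightarrow> (\<Sum>i<d. y i \<omega>) \<le> (\<Sum>i<d. y i \<omega>') \<Longrightarrow> i < d \<Longrightarrow> y i \<omega> \<le> y i \<omega>'"
    using ord by (auto simp: A_def)
  have ordB: "\<And>\<omega> \<omega>' i. \<omega> \<in> B \<Longrightarrow> \<omega>' \<in> B \<Longrightarrow> (\<Sum>i<d. y i \<omega>) \<le> (\<Sum>i<d. y i \<omega>') \<Longrightarrow> i < d \<Longrightarrow> y i \<omega> \<le> y i \<omega>'"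
    using ord by (auto simp: B_def)
  have dpos: "real d > 0" using d by simp
  have geB: "\<And>\<omega>. \<omega> \<in> B \<Longrightarrow> t \<le> (\<Sum>i<d. y i \<omega>)" by (auto simp: B_def)
  have leA: "\<And>\<omega>. \<omega> \<in> A \<Longrightarrow> (\<Sum>i<d. y i \<omega>) \<le> t" by (auto simp: A_def)
  show ?thesis
  proof (cases "A = {}")
    case Ae: True
    show ?thesis
    proof (cases "B = {}")
      case True
      show ?thesis
        by (rule exI[of _ "\<lambda>i. t / d"]) (use Ae True dpos in \<open>auto simp: A_def B_def\<close>)
    next
      case False
      obtain b where b: "\<forall>i<d. \<forall>\<omega>\<in>B. b i \<le> y i \<omega>" "t \<le> (\<Sum>i<d. b i)"
        using chain_inf[where y=y and d=d, OF False ordB geB] by blast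
      show ?thesis
      proof (rule exI[of _ "\<lambda>i. b i - ((\<Sum>i<d. b i) - t) / d"], intro conjI ballI impI allI)
        show "(\<Sum>i<d. b i - ((\<Sum>i<d. b i) - t) / real d) = t" using dpos by (simp add: sum_subtractf)
      next
        fix \<omega> i assume "\<omega> \<in> G" "(\<Sum>i<d. y i \<omega>) \<le> t" "i < d"
        then show "y i \<omega> \<le> b i - ((\<Sum>i<d. b i) - t) / real d" using Ae by (auto simp: A_def)
      next
        fix \<omega> i assume "\<omega> \<in> G" "t < (\<Sum>i<d. y i \<omega>)" "i < d"
        then have "b i \<le> y i \<omega>" using b(1) by (auto simp: B_def)
        moreover have "((\<Sum>i<d. b i) - t) / real d \<ge> 0" using b(2) dpos by simp
        ultimately show "b i - ((\<Sum>i<d. b i) - t) / real d \<le> y i \<omega>" by linarith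
      qed
    qed
  next
    case Ane: False
    obtain a where a: "\<forall>i<d. \<forall>\<omega>\<in>A. y i \<omega> \<le> a i" "\<forall>i<d. \<forall>c. (\<forall>\<omega>\<in>A. y i \<omega> \<le> c) \<longrightarrow> a i \<le> c"
       "(\<Sum>i<d. a i) \<le> t"
      using chain_sup[where y=y and d=d, OF Ane ordA leA] by blast
    show ?thesis
    proof (cases "B = {}")
      case True
      show ?thesis
      proof (rule exI[of _ "\<lambda>i. a i + (t - (\<Sum>i<d. a i)) / d"], intro conjI ballI impI allI)
        show "(\<Sum>i<d. a i + (t - (\<Sum>i<d. a i)) / real d) = t" using dpos by (simp add: sum.distrib)
      next
        fix \<omega> i assume "\<omega> \<in> G" "(\<Sum>i<d. y i \<omega>) \<le> t" "i < d"
        then have "y i \<omega> \<le> a i" using a(1) by (auto simp: A_def)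
        moreover have "(t - (\<Sum>i<d. a i)) / real d \<ge> 0" using a(3) dpos by simp
        ultimately show "y i \<omega> \<le> a i + (t - (\<Sum>i<d. a i)) / real d" by linarith
      next
        fix \<omega> i assume "\<omega> \<in> G" "t < (\<Sum>i<d. y i \<omega>)" "i < d"
        then show "a i + (t - (\<Sum>i<d. a i)) / real d \<le> y i \<omega>" using True by (auto simp: B_def)
      qed
    next
      case Bne: False
      obtain b where b: "\<forall>i<d. \<forall>\<omega>\<in>B. b i \<le> y i \<omega>" "\<forall>i<d. \<forall>c. (\<forall>\<omega>\<in>B. c \<le> y i \<omega>) \<longrightarrow> c \<le> b i"
         "t \<le> (\<Sum>i<d. b i)"
        using chain_inf[where y=y and d=d, OF Bne ordB geB] by blast
      have ab: "a i \<le> b i" if i: "i < d" for i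
      proof -
        have "a i \<le> y i \<omega>'" if "\<omega>' \<in> B" for \<omega>'
        proof -
          have "\<forall>\<omega>\<in>A. y i \<omega> \<le> y i \<omega>'"
          proof
            fix \<omega> assume "\<omega> \<in> A"
            then show "y i \<omega> \<le> y i \<omega>'" using that i ord[of \<omega> \<omega>' i] by (auto simp: A_def B_def)
          qed
          then show ?thesis using a(2) i by blast
        qed
        then show ?thesis using b(2) i by blast
      qed
      define sa where "sa = (\<Sum>i<d. a i)"
      define sb where "sb = (\<Sum>i<d. b i)"
      define l where "l = (if sa < sb then (t - sa) / (sb - sa) else 0)"
      have l01: "0 \<le> l" "l \<le> 1" using a(3) b(3) by (auto simp: l_def sa_def sb_def field_simps)
      have sab: "sa \<le> sb" unfolding sa_def sb_def using ab by (intro sum_mono) auto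
      show ?thesis
      proof (rule exI[of _ "\<lambda>i. a i + l * (b i - a i)"], intro conjI ballI impI allI)
        have "(\<Sum>i<d. a i + l * (b i - a i)) = sa + l * (sb - sa)"
          by (simp add: sa_def sb_def sum.distrib sum_distrib_left sum_subtractf algebra_simps)
        also have "\<dots> = t" using a(3) b(3) sab by (auto simp: l_def sa_def sb_def)
        finally show "(\<Sum>i<d. a i + l * (b i - a i)) = t" .
      next
        fix \<omega> i assume "\<omega> \<in> G" "(\<Sum>i<d. y i \<omega>) \<le> t" "i < d"
        then have "y i \<omega> \<le> a i" using a(1) by (auto simp: A_def)
        moreover have "0 \<le> l * (b i - a i)" using l01 ab[OF \<open>i < d\<close>] by simp
        ultimately show "y i \<omega> \<le> a i + l * (b i - a i)" by linarith
      next
        fix \<omega> i assume "\<omega> \<in> G" "t < (\<Sum>i<d. y i \<omega>)" "i < d"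
        then have "b i \<le> y i \<omega>" using b(1) by (auto simp: B_def)
        moreover have "l * (b i - a i) \<le> 1 * (b i - a i)" using l01 ab[OF \<open>i < d\<close>]
          by (intro mult_right_mono) auto
        ultimately show "a i + l * (b i - a i) \<le> y i \<omega>" by simp
      qed
    qed
  qed
qed



lemma law_eq_nn:
  assumes [measurable]: "X \<in> borel_measurable M" "Y \<in> borel_measurable M"
    and eq: "distr M borel Y = distr M borel X"
    and g[measurable]: "g \<in> borel_measurable borel"
  shows "(\<integral>\<^sup>+x. g (X x) \<partial>M) = (\<integral>\<^sup>+x. g (Y x) \<partial>M)"
proof -
  have "(\<integral>\<^sup>+x. g (X x) \<partial>M) = (\<integral>\<^sup>+z. g z \<partial>distr M borel X)"
    by (rule nn_integral_distr[symmetric]) auto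
  also have "\<dots> = (\<integral>\<^sup>+z. g z \<partial>distr M borel Y)" by (simp add: eq)
  also have "\<dots> = (\<integral>\<^sup>+x. g (Y x) \<partial>M)" by (rule nn_integral_distr) auto
  finally show ?thesis .
qed

lemma como_hinges:
  fixes M :: "'a measure" and d :: nat and X Y :: "nat \<Rightarrow> 'a \<Rightarrow> real"
  assumes P: "prob_space M"
    and Xm: "\<And>i. i < d \<Longrightarrow> X i \<in> borel_measurable M"
    and cv: "comonotonic_version M d X Y"
  shows "(\<integral>\<^sup>+x. ennreal (max ((\<Sum>i<d. X i x) - t) 0) \<partial>M) \<le> (\<integral>\<^sup>+x. ennreal (max ((\<Sum>i<d. Y i x) - t) 0) \<partial>M)"
    and "(\<integral>\<^sup>+x. ennreal (max (t - (\<Sum>i<d. X i x)) 0) \<partial>M) \<le> (\<integral>\<^sup>+x. ennreal (max (t - (\<Sum>i<d. Y i x)) 0) \<partial>M)"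
proof -
  interpret prob_space M by (rule P)
  have Ym: "\<And>i. i < d \<Longrightarrow> Y i \<in> borel_measurable M"
    and law: "\<And>i. i < d \<Longrightarrow> distr M borel (Y i) = distr M borel (X i)"
    and cvec: "comonotonic_vec M d Y" using cv by (auto simp: comonotonic_version_def)
  have "(\<integral>\<^sup>+x. ennreal (max ((\<Sum>i<d. X i x) - t) 0) \<partial>M) \<le> (\<integral>\<^sup>+x. ennreal (max ((\<Sum>i<d. Y i x) - t) 0) \<partial>M) \<and>
        (\<integral>\<^sup>+x. ennreal (max (t - (\<Sum>i<d. X i x)) 0) \<partial>M) \<le> (\<integral>\<^sup>+x. ennreal (max (t - (\<Sum>i<d. Y i x)) 0) \<partial>M)"
  proof (cases "d = 0")
    case True then show ?thesis by simp
  next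
    case False
    then have dpos: "d > 0" by simp
    have ex: "\<forall>i j. \<exists>t::('a \<Rightarrow> real) \<times> (real \<Rightarrow> real) \<times> (real \<Rightarrow> real). i < d \<and> j < d \<longrightarrow> mono (fst (snd t)) \<and> mono (snd (snd t)) \<and>
        (AE x in M. Y i x = fst (snd t) (fst t x) \<and> Y j x = snd (snd t) (fst t x))"
    proof (intro allI)
      fix i j
      show "\<exists>t::('a \<Rightarrow> real) \<times> (real \<Rightarrow> real) \<times> (real \<Rightarrow> real). i < d \<and> j < d \<longrightarrow> mono (fst (snd t)) \<and> mono (snd (snd t)) \<and>
        (AE x in M. Y i x = fst (snd t) (fst t x) \<and> Y j x = snd (snd t) (fst t x))"
      proof (cases "i < d \<and> j < d")
        case True
        then have "comonotonic_pair M (Y i) (Y j)" using cvec by (simp add: comonotonic_vec_def)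
        then obtain Z :: "'a \<Rightarrow> real" and f g :: "real \<Rightarrow> real" where zfg: "mono f" "mono g" "AE x in M. Y i x = f (Z x) \<and> Y j x = g (Z x)"
          unfolding comonotonic_pair_def by blast
        show ?thesis by (rule exI[of _ "(Z, f, g)"]) (use zfg in simp)
      next
        case False
        show ?thesis by (rule exI[of _ "undefined"]) (use False in blast)
      qed
    qed
    define Pr where "Pr i j t \<longleftrightarrow> (i < d \<and> j < d \<longrightarrow> mono (fst (snd t)) \<and> mono (snd (snd t)) \<and>
        (AE x in M. Y i x = fst (snd t) (fst t x) \<and> Y j x = snd (snd t) (fst t x)))"
      for i j and t :: "('a \<Rightarrow> real) \<times> (real \<Rightarrow> real) \<times> (real \<Rightarrow> real)"
    have ex': "\<forall>i j. \<exists>t. Pr i j t" using ex unfolding Pr_def .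
    have "\<forall>i. \<exists>w. \<forall>j. Pr i j (w j)"
    proof
      fix i show "\<exists>w. \<forall>j. Pr i j (w j)" by (rule choice) (use ex' in blast)
    qed
    then have "\<exists>W. \<forall>i. \<forall>j. Pr i j (W i j)" by (rule choice)
    then obtain W where W0: "\<forall>i. \<forall>j. Pr i j (W i j)" by blast
    have W: "\<forall>i. \<forall>j. i < d \<and> j < d \<longrightarrow> mono (fst (snd (W i j))) \<and> mono (snd (snd (W i j))) \<and>
        (AE x in M. Y i x = fst (snd (W i j)) (fst (W i j) x) \<and> Y j x = snd (snd (W i j)) (fst (W i j) x))"
      using W0 unfolding Pr_def .
    define Z where "Z i j = fst (W i j)" for i j
    define F where "F i j = fst (snd (W i j))" for i j
    define Gf where "Gf i j = snd (snd (W i j))" for i j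
    have ZFG: "\<And>i j. i < d \<Longrightarrow> j < d \<Longrightarrow> mono (F i j) \<and> mono (Gf i j) \<and>
        (AE x in M. Y i x = F i j (Z i j x) \<and> Y j x = Gf i j (Z i j x))"
      using W unfolding Z_def F_def Gf_def by blast
    define Gd where "Gd = {x \<in> space M. \<forall>i\<in>{..<d}. \<forall>j\<in>{..<d}. Y i x = F i j (Z i j x) \<and> Y j x = Gf i j (Z i j x)}"
    have AEG: "AE x in M. x \<in> Gd"
    proof -
      have "AE x in M. \<forall>i\<in>{..<d}. \<forall>j\<in>{..<d}. Y i x = F i j (Z i j x) \<and> Y j x = Gf i j (Z i j x)"
        by (intro AE_finite_allI) (use ZFG in auto)
      then show ?thesis unfolding Gd_def by (auto elim: AE_mp intro!: AE_I2)
    qed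
    have pair: "Y j \<omega>' \<le> Y j \<omega>" if "\<omega> \<in> Gd" "\<omega>' \<in> Gd" "i < d" "j < d" "Y i \<omega>' < Y i \<omega>" for \<omega> \<omega>' i j
    proof -
      have e: "Y i \<omega> = F i j (Z i j \<omega>)" "Y j \<omega> = Gf i j (Z i j \<omega>)"
              "Y i \<omega>' = F i j (Z i j \<omega>')" "Y j \<omega>' = Gf i j (Z i j \<omega>')"
      proof -
        have g1: "Y i \<omega> = F i j (Z i j \<omega>) \<and> Y j \<omega> = Gf i j (Z i j \<omega>)"
          using that(1,3,4) unfolding Gd_def by blast
        have g2: "Y i \<omega>' = F i j (Z i j \<omega>') \<and> Y j \<omega>' = Gf i j (Z i j \<omega>')"
          using that(2,3,4) unfolding Gd_def by blast
        show "Y i \<omega> = F i j (Z i j \<omega>)" "Y j \<omega> = Gf i j (Z i j \<omega>)"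
              "Y i \<omega>' = F i j (Z i j \<omega>')" "Y j \<omega>' = Gf i j (Z i j \<omega>')"
          using g1 g2 by simp_all
      qed
      have m: "mono (F i j)" "mono (Gf i j)" using ZFG that(3,4) by auto
      have "Z i j \<omega>' < Z i j \<omega>"
      proof (rule ccontr)
        assume "\<not> Z i j \<omega>' < Z i j \<omega>"
        have "F i j (Z i j \<omega>) \<le> F i j (Z i j \<omega>')" by (rule monoD[OF m(1)]) (use \<open>\<not> Z i j \<omega>' < Z i j \<omega>\<close> in simp)
        then show False using that(5) e(1,3) by linarith
      qed
      have "Gf i j (Z i j \<omega>') \<le> Gf i j (Z i j \<omega>)" by (rule monoD[OF m(2)]) (use \<open>Z i j \<omega>' < Z i j \<omega>\<close> in simp)
      then show ?thesis using e(2,4) by simp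
    qed
    have ord: "Y i \<omega> \<le> Y i \<omega>'" if "\<omega> \<in> Gd" "\<omega>' \<in> Gd" "(\<Sum>i<d. Y i \<omega>) \<le> (\<Sum>i<d. Y i \<omega>')" "i < d" for \<omega> \<omega>' i
    proof (rule ccontr)
      assume "\<not> Y i \<omega> \<le> Y i \<omega>'"
      then have lt: "Y i \<omega>' < Y i \<omega>" by simp
      have "(\<Sum>i<d. Y i \<omega>') < (\<Sum>i<d. Y i \<omega>)"
      proof (rule sum_strict_mono_ex1)
        show "\<forall>j\<in>{..<d}. Y j \<omega>' \<le> Y j \<omega>" using pair[OF that(1,2) that(4) _ lt] by blast
        show "\<exists>j\<in>{..<d}. Y j \<omega>' < Y j \<omega>" using that(4) lt by blast
      qed simp
      then show False using that(3) by simp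
    qed
    obtain \<tau> where \<tau>: "(\<Sum>i<d. \<tau> i) = t" "\<forall>\<omega>\<in>Gd. (\<Sum>i<d. Y i \<omega>) \<le> t \<longrightarrow> (\<forall>i<d. Y i \<omega> \<le> \<tau> i)"
        "\<forall>\<omega>\<in>Gd. t < (\<Sum>i<d. Y i \<omega>) \<longrightarrow> (\<forall>i<d. \<tau> i \<le> Y i \<omega>)"
      using thresholds[where y = Y and G = Gd and t = t, OF dpos ord] by blast
    have sumX: "(\<Sum>i<d. X i x) - t = (\<Sum>i<d. X i x - \<tau> i)" for x using \<tau>(1) by (simp add: sum_subtractf)
    have sumY: "(\<Sum>i<d. Y i x) - t = (\<Sum>i<d. Y i x - \<tau> i)" for x using \<tau>(1) by (simp add: sum_subtractf)
    have sumX2: "t - (\<Sum>i<d. X i x) = (\<Sum>i<d. \<tau> i - X i x)" for x using \<tau>(1) by (simp add: sum_subtractf)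
    have sumY2: "t - (\<Sum>i<d. Y i x) = (\<Sum>i<d. \<tau> i - Y i x)" for x using \<tau>(1) by (simp add: sum_subtractf)
    have maxsum: "max (\<Sum>i<d. f i) 0 \<le> (\<Sum>i<d. max (f i) 0)" for f :: "nat \<Rightarrow> real"
    proof -
      have "(\<Sum>i<d. f i) \<le> (\<Sum>i<d. max (f i) 0)" by (intro sum_mono) auto
      moreover have "0 \<le> (\<Sum>i<d. max (f i) 0)" by (intro sum_nonneg) auto
      ultimately show ?thesis by simp
    qed
    have ens: "ennreal (\<Sum>i<d. max (f i) 0) = (\<Sum>i<d. ennreal (max (f i) 0))" for f :: "nat \<Rightarrow> real"
      by (rule sum_ennreal[symmetric]) auto
    have [measurable]: "\<And>i. i < d \<Longrightarrow> X i \<in> borel_measurable M" "\<And>i. i < d \<Longrightarrow> Y i \<in> borel_measurable M"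
      using Xm Ym by auto
    have h1: "(\<integral>\<^sup>+x. ennreal (max ((\<Sum>i<d. X i x) - t) 0) \<partial>M) \<le> (\<integral>\<^sup>+x. ennreal (max ((\<Sum>i<d. Y i x) - t) 0) \<partial>M)"
    proof -
      have "(\<integral>\<^sup>+x. ennreal (max ((\<Sum>i<d. X i x) - t) 0) \<partial>M) \<le> (\<integral>\<^sup>+x. (\<Sum>i<d. ennreal (max (X i x - \<tau> i) 0)) \<partial>M)"
        unfolding sumX by (intro nn_integral_mono) (simp only: ens[symmetric] ennreal_leI maxsum)
      also have "\<dots> = (\<Sum>i<d. \<integral>\<^sup>+x. ennreal (max (X i x - \<tau> i) 0) \<partial>M)"
        by (rule nn_integral_sum) auto
      also have "\<dots> = (\<Sum>i<d. \<integral>\<^sup>+x. ennreal (max (Y i x - \<tau> i) 0) \<partial>M)"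
        by (intro sum.cong refl law_eq_nn[where g = "\<lambda>z. ennreal (max (z - \<tau> _) 0)"] law) (auto simp: Xm Ym)
      also have "\<dots> = (\<integral>\<^sup>+x. (\<Sum>i<d. ennreal (max (Y i x - \<tau> i) 0)) \<partial>M)"
        by (rule nn_integral_sum[symmetric]) auto
      also have "\<dots> = (\<integral>\<^sup>+x. ennreal (max ((\<Sum>i<d. Y i x) - t) 0) \<partial>M)"
      proof (rule nn_integral_cong_AE)
        show "AE x in M. (\<Sum>i<d. ennreal (max (Y i x - \<tau> i) 0)) = ennreal (max ((\<Sum>i<d. Y i x) - t) 0)"
          using AEG
        proof (rule AE_mp, intro AE_I2 impI)
          fix x assume x: "x \<in> Gd"
          show "(\<Sum>i<d. ennreal (max (Y i x - \<tau> i) 0)) = ennreal (max ((\<Sum>i<d. Y i x) - t) 0)"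
          proof (cases "(\<Sum>i<d. Y i x) \<le> t")
            case True
            then have "\<forall>i<d. Y i x \<le> \<tau> i" using \<tau>(2) x by auto
            then show ?thesis using True by simp
          next
            case False
            then have ge: "\<forall>i<d. \<tau> i \<le> Y i x" using \<tau>(3) x by auto
            have "(\<Sum>i<d. ennreal (max (Y i x - \<tau> i) 0)) = ennreal (\<Sum>i<d. max (Y i x - \<tau> i) 0)"
              by (rule ens[symmetric])
            also have "(\<Sum>i<d. max (Y i x - \<tau> i) 0) = (\<Sum>i<d. Y i x - \<tau> i)"
              using ge by (intro sum.cong) auto
            finally show ?thesis using False sumY[of x] by simp
          qed
        qed
      qed
      finally show ?thesis .
    qed
    have h2: "(\<integral>\<^sup>+x. ennreal (max (t - (\<Sum>i<d. X i x)) 0) \<partial>M) \<le> (\<integral>\<^sup>+x. ennreal (max (t - (\<Sum>i<d. Y i x)) 0) \<partial>M)"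
    proof -
      have "(\<integral>\<^sup>+x. ennreal (max (t - (\<Sum>i<d. X i x)) 0) \<partial>M) \<le> (\<integral>\<^sup>+x. (\<Sum>i<d. ennreal (max (\<tau> i - X i x) 0)) \<partial>M)"
        unfolding sumX2 by (intro nn_integral_mono) (simp only: ens[symmetric] ennreal_leI maxsum)
      also have "\<dots> = (\<Sum>i<d. \<integral>\<^sup>+x. ennreal (max (\<tau> i - X i x) 0) \<partial>M)"
        by (rule nn_integral_sum) auto
      also have "\<dots> = (\<Sum>i<d. \<integral>\<^sup>+x. ennreal (max (\<tau> i - Y i x) 0) \<partial>M)"
        by (intro sum.cong refl law_eq_nn[where g = "\<lambda>z. ennreal (max (\<tau> _ - z) 0)"] law) (auto simp: Xm Ym)
      also have "\<dots> = (\<integral>\<^sup>+x. (\<Sum>i<d. ennreal (max (\<tau> i - Y i x) 0)) \<partial>M)"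
        by (rule nn_integral_sum[symmetric]) auto
      also have "\<dots> = (\<integral>\<^sup>+x. ennreal (max (t - (\<Sum>i<d. Y i x)) 0) \<partial>M)"
      proof (rule nn_integral_cong_AE)
        show "AE x in M. (\<Sum>i<d. ennreal (max (\<tau> i - Y i x) 0)) = ennreal (max (t - (\<Sum>i<d. Y i x)) 0)"
          using AEG
        proof (rule AE_mp, intro AE_I2 impI)
          fix x assume x: "x \<in> Gd"
          show "(\<Sum>i<d. ennreal (max (\<tau> i - Y i x) 0)) = ennreal (max (t - (\<Sum>i<d. Y i x)) 0)"
          proof (cases "(\<Sum>i<d. Y i x) \<le> t")
            case False
            then have "\<forall>i<d. \<tau> i \<le> Y i x" using \<tau>(3) x by auto
            then show ?thesis using False by simp
          next
            case True
            then have ge: "\<forall>i<d. Y i x \<le> \<tau> i" using \<tau>(2) x by auto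
            have "(\<Sum>i<d. ennreal (max (\<tau> i - Y i x) 0)) = ennreal (\<Sum>i<d. max (\<tau> i - Y i x) 0)"
              by (rule ens[symmetric])
            also have "(\<Sum>i<d. max (\<tau> i - Y i x) 0) = (\<Sum>i<d. \<tau> i - Y i x)"
              using ge by (intro sum.cong) auto
            finally show ?thesis using True sumY2[of x] by simp
          qed
        qed
      qed
      finally show ?thesis .
    qed
    show ?thesis using h1 h2 by simp
  qed
  then show "(\<integral>\<^sup>+x. ennreal (max ((\<Sum>i<d. X i x) - t) 0) \<partial>M) \<le> (\<integral>\<^sup>+x. ennreal (max ((\<Sum>i<d. Y i x) - t) 0) \<partial>M)"
    and "(\<integral>\<^sup>+x. ennreal (max (t - (\<Sum>i<d. X i x)) 0) \<partial>M) \<le> (\<integral>\<^sup>+x. ennreal (max (t - (\<Sum>i<d. Y i x)) 0) \<partial>M)"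
    by auto
qed

theorem theorem5:
  fixes M :: "'a measure" and d :: nat and X Y :: "nat \<Rightarrow> 'a \<Rightarrow> real"
  assumes "prob_space M"
    and "atomless M"
    and "\<And>i. i < d \<Longrightarrow> X i \<in> borel_measurable M"
    and "comonotonic_version M d X Y"
  shows "cx_le M (\<lambda>\<omega>. \<Sum>i<d. X i \<omega>) (\<lambda>\<omega>. \<Sum>i<d. Y i \<omega>)"
  unfolding cx_le_def
proof (intro allI impI)
  fix u :: "real \<Rightarrow> real"
  assume cvx: "convex_on UNIV u"
    and wdS: "exp_well_defined M (\<lambda>x. u (\<Sum>i<d. X i x))"
    and wdT: "exp_well_defined M (\<lambda>x. u (\<Sum>i<d. Y i x))"
  have Ym: "\<And>i. i < d \<Longrightarrow> Y i \<in> borel_measurable M" using assms(4) by (auto simp: comonotonic_version_def)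
  have mS: "(\<lambda>x. \<Sum>i<d. X i x) \<in> borel_measurable M" using assms(3) by (intro borel_measurable_sum) auto
  have mT: "(\<lambda>x. \<Sum>i<d. Y i x) \<in> borel_measurable M" using Ym by (intro borel_measurable_sum) auto
  show "ext_expectation M (\<lambda>x. u (\<Sum>i<d. X i x)) \<le> ext_expectation M (\<lambda>x. u (\<Sum>i<d. Y i x))"
    by (rule ext_exp_dom[OF assms(1) mS mT como_hinges(1)[OF assms(1,3,4)] como_hinges(2)[OF assms(1,3,4)] cvx wdS wdT])
qed


end
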